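(* Let $\bm A\colon\mathbb{R}^d\to\mathbb{R}^m$ and $\bm B\colon\mathbb{R}^d\to\mathbb{R}^n$ be linear maps. Let $\bm a_1,\bm a_2,\ldots\in\mathbb{R}^d$ be a sequence such that $\bm A\bm a_1,\bm A\bm a_2,\ldots$ converges to $\bm v\in\mathbb{R}^m$ and $\bm B$ is simultaneously unbounded on $\bm a_1,\bm a_2,\ldots$. Then there exist (1) $\bm a\in\mathbb{R}^d$ with $\bm A\bm a=\bm v$, and (2) $\bm d_\infty\in\mathbb{R}^d$ with $\bm A\bm d_\infty=\bm 0$ and $\bm B\bm d_\infty\gg\bm 0$.
   Context: $\bm B$ is simultaneously unbounded on a sequence $\bm a_1,\bm a_2,\dots$ if for every $K\in\mathbb{N}$, $\bm B\bm a_j\ge(K,\dots,K)$ componentwise for almost all $j$. For vectors, $\bm u\gg\bm w$ means $u_i>w_i$ for every component $i$. *)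

theory Defs
  imports "HOL-Analysis.Analysis"
begin

definition simult_unbounded :: "real^'d^'n \<Rightarrow> (nat \<Rightarrow> real^'d) \<Rightarrow> bool" where
  "simult_unbounded B a \<longleftrightarrow>
     (\<forall>K::nat. eventually (\<lambda>j. \<forall>i. (B *v a j) $ i \<ge> real K) sequentially)"

end

theory Submission
  imports Defs
begin

theorem mainTheorem12:
  fixes A :: "real^'d^'m" and B :: "real^'d^'n"
    and a :: "nat \<Rightarrow> real^'d" and v :: "real^'m"
  assumes "(\<lambda>j. A *v a j) \<longlonglongrightarrow> v"
    and "simult_unbounded B a"
  shows "(\<exists>x. A *v x = v) \<and> (\<exists>d. A *v d = 0 \<and> (\<forall>i. (B *v d) $ i > 0))"
proof -
  have lA: "linear (\<lambda>x. A *v x)" by (rule matrix_vector_mul_linear)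
  obtain g where lg: "linear g" and gi: "\<forall>y\<in>range (\<lambda>x. A *v x). A *v (g y) = y"
    using real_vector.linear_exists_right_inverse_on[OF lA real_vector.subspace_UNIV] by auto
  have gA: "A *v g (A *v x) = A *v x" for x using gi by auto
  have cg: "(\<lambda>j. g (A *v a j)) \<longlonglongrightarrow> g v"
    using linear_continuous_at[OF lg[unfolded linear_conv_bounded_linear]] assms(1) isCont_tendsto_compose by blast
  have "(\<lambda>j. A *v g (A *v a j)) \<longlonglongrightarrow> A *v g v"
    using linear_continuous_at[OF lA[unfolded linear_conv_bounded_linear]] cg isCont_tendsto_compose by blast
  hence "(\<lambda>j. A *v a j) \<longlonglongrightarrow> A *v g v" by (simp add: gA)
  hence v: "A *v g v = v" using assms(1) LIMSEQ_unique by blast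
  have cB: "(\<lambda>j. B *v g (A *v a j)) \<longlonglongrightarrow> B *v g v"
    using linear_continuous_at[OF matrix_vector_mul_linear[of B, unfolded linear_conv_bounded_linear]] cg isCont_tendsto_compose by blast
  have ev1: "eventually (\<lambda>j. dist (B *v g (A *v a j)) (B *v g v) < 1) sequentially"
    using cB tendstoD by (metis zero_less_one)
  define K :: nat where "K = nat \<lceil>norm (B *v g v) + 2\<rceil>"
  have ev2: "eventually (\<lambda>j. \<forall>i. (B *v a j) $ i \<ge> real K) sequentially"
    using assms(2) unfolding simult_unbounded_def by blast
  obtain j where j1: "dist (B *v g (A *v a j)) (B *v g v) < 1"
    and j2: "\<forall>i. (B *v a j) $ i \<ge> real K"
    using eventually_happens'[OF sequentially_bot eventually_conj[OF ev1 ev2]] by blast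
  define d where "d = a j - g (A *v a j)"
  have "A *v d = 0" unfolding d_def by (simp add: matrix_vector_mult_diff_distrib gA)
  moreover have "(B *v d) $ i > 0" for i
  proof -
    have e: "(B *v d) $ i = (B *v a j) $ i - (B *v g (A *v a j)) $ i"
      unfolding d_def by (simp add: matrix_vector_mult_diff_distrib)
    have "\<bar>(B *v g (A *v a j) - B *v g v) $ i\<bar> < 1"
      using j1 component_le_norm_cart[of "B *v g (A *v a j) - B *v g v" i]
      by (simp add: dist_norm)
    moreover have "\<bar>(B *v g v) $ i\<bar> \<le> norm (B *v g v)" by (rule component_le_norm_cart)
    moreover have "real K \<ge> norm (B *v g v) + 2" unfolding K_def by linarith
    ultimately show ?thesis using e j2[rule_format, of i] by auto
  qed
  ultimately show ?thesis using v by blast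
qed

end
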